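(* Let $S$ be a $0$-left cancellative semigroup admitting least common multiples, and let $\pi$ be a representation of $S$ on a set $\Omega$ which respects least common multiples. Then the inverse subsemigroup $\mathcal I(\Omega,\pi)$ of $\mathcal I(\Omega)$ generated by $\{\pi_s:s\in S\}$ equals $$\{\pi_u f_\Lambda \pi_v^{-1} : \Lambda\subseteq\tilde S \text{ finite},\ \Lambda\cap S\neq\emptyset,\ u,v\in\Lambda\}.$$
   Context: $S$ is a semigroup with zero $0$; it is $0$-left cancellative if $st=sr\neq0$ implies $t=r$. Let $\tilde S=S\cup\{1\}$ where $1\notin S$ acts as an identity. For $s,t\in S$, $s$ divides $t$ ($s\mid t$) if $t\in s\tilde S$. An element $r\in S$ is a least common multiple of $s,t\in S$ if $sS\cap tS=rS$ and both $s\mid r$ and $t\mid r$; $S$ admits least common multiples if every pair of elements has one. $\mathcal I(\Omega)$ is the inverse semigroup of all partial bijections of $\Omega$. A representation of $S$ on $\Omega$ is a map $s\mapsto\pi_s\in\mathcal I(\Omega)$ with $\pi_0$ the empty map and $\pi_s\circ\pi_t=\pi_{st}$. Write $E_s$ for the range of $\pi_s$. $\pi$ respects least common multiples if $E_r=E_s\cap E_t$ whenever $r$ is a least common multiple of $s$ and $t$. Extend $\pi$ to $\tilde S$ by $\pi_1=\mathrm{id}_\Omega$. For $u\in\tilde S$ let $f_u=\pi_u^{-1}\pi_u$ (identity on the domain of $\pi_u$), and for finite nonempty $\Lambda\subseteq\tilde S$ let $f_\Lambda=\prod_{u\in\Lambda}f_u$. *)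

theory Defs
  imports Main
begin

text \<open>Semigroups with zero: a type of class semigroup_mult with mult_zero
  (0 * x = 0 = x * 0). The semigroup S is the whole carrier type.\<close>

definition zero_left_cancellative :: "('a::{semigroup_mult,mult_zero}) itself \<Rightarrow> bool" where
  "zero_left_cancellative _ \<longleftrightarrow> (\<forall>s t r::'a. s * t = s * r \<and> s * r \<noteq> 0 \<longrightarrow> t = r)"

text \<open>s divides t: t \<in> s S~, i.e. t = s or t = s r for some r.\<close>
definition sdivides :: "'a::semigroup_mult \<Rightarrow> 'a \<Rightarrow> bool" where
  "sdivides s t \<longleftrightarrow> t = s \<or> (\<exists>r. t = s * r)"

definition is_lcm :: "'a::semigroup_mult \<Rightarrow> 'a \<Rightarrow> 'a \<Rightarrow> bool" where
  "is_lcm r s t \<longleftrightarrow> range ((*) s) \<inter> range ((*) t) = range ((*) r) \<and> sdivides s r \<and> sdivides t r"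

definition admits_lcm :: "('a::semigroup_mult) itself \<Rightarrow> bool" where
  "admits_lcm _ \<longleftrightarrow> (\<forall>s t::'a. \<exists>r. is_lcm r s t)"

definition pbij :: "'b set \<Rightarrow> ('b \<rightharpoonup> 'b) set" where
  "pbij \<Omega> = {f. dom f \<subseteq> \<Omega> \<and> ran f \<subseteq> \<Omega> \<and> inj_on f (dom f)}"

definition pinv :: "('b \<rightharpoonup> 'b) \<Rightarrow> ('b \<rightharpoonup> 'b)" where
  "pinv f = (\<lambda>y. if y \<in> ran f then Some (THE x. f x = Some y) else None)"

definition is_representation :: "'b set \<Rightarrow> ('a::{semigroup_mult,mult_zero} \<Rightarrow> ('b \<rightharpoonup> 'b)) \<Rightarrow> bool" where
  "is_representation \<Omega> \<pi> \<longleftrightarrow> (\<forall>s. \<pi> s \<in> pbij \<Omega>) \<and> \<pi> 0 = Map.empty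
     \<and> (\<forall>s t. \<pi> s \<circ>\<^sub>m \<pi> t = \<pi> (s * t))"

definition respects_lcm :: "('a::{semigroup_mult,mult_zero} \<Rightarrow> ('b \<rightharpoonup> 'b)) \<Rightarrow> bool" where
  "respects_lcm \<pi> \<longleftrightarrow> (\<forall>r s t. is_lcm r s t \<longrightarrow> ran (\<pi> r) = ran (\<pi> s) \<inter> ran (\<pi> t))"

text \<open>S~ = S \<union> {1} is modelled as 'a option, with None playing the role of 1.\<close>
definition pi_tilde :: "'b set \<Rightarrow> ('a \<Rightarrow> ('b \<rightharpoonup> 'b)) \<Rightarrow> 'a option \<Rightarrow> ('b \<rightharpoonup> 'b)" where
  "pi_tilde \<Omega> \<pi> u = (case u of None \<Rightarrow> (\<lambda>x. if x \<in> \<Omega> then Some x else None) | Some s \<Rightarrow> \<pi> s)"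

definition f_elem :: "'b set \<Rightarrow> ('a \<Rightarrow> ('b \<rightharpoonup> 'b)) \<Rightarrow> 'a option \<Rightarrow> ('b \<rightharpoonup> 'b)" where
  "f_elem \<Omega> \<pi> u = pinv (pi_tilde \<Omega> \<pi> u) \<circ>\<^sub>m pi_tilde \<Omega> \<pi> u"

text \<open>f_\<Lambda> = product of the commuting idempotents f_u, u \<in> \<Lambda>: the identity on
  the intersection of their domains (within \<Omega>).\<close>
definition f_set :: "'b set \<Rightarrow> ('a \<Rightarrow> ('b \<rightharpoonup> 'b)) \<Rightarrow> 'a option set \<Rightarrow> ('b \<rightharpoonup> 'b)" where
  "f_set \<Omega> \<pi> \<Lambda> = (\<lambda>x. if x \<in> \<Omega> \<and> (\<forall>u\<in>\<Lambda>. x \<in> dom (f_elem \<Omega> \<pi> u)) then Some x else None)"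

inductive_set gen_inv :: "('a \<Rightarrow> ('b \<rightharpoonup> 'b)) \<Rightarrow> ('b \<rightharpoonup> 'b) set" for \<pi> where
  base: "\<pi> s \<in> gen_inv \<pi>"
| comp: "f \<in> gen_inv \<pi> \<Longrightarrow> g \<in> gen_inv \<pi> \<Longrightarrow> f \<circ>\<^sub>m g \<in> gen_inv \<pi>"
| inv: "f \<in> gen_inv \<pi> \<Longrightarrow> pinv f \<in> gen_inv \<pi>"

end

theory Submission
  imports Defs
begin

lemma pinv_Some: "inj_on f (dom f) \<Longrightarrow> pinv f y = Some x \<longleftrightarrow> f x = Some y"
proof
  assume inj: "inj_on f (dom f)" and h: "pinv f y = Some x"
  then have yr: "y \<in> ran f" unfolding pinv_def by (auto split: if_splits)
  then obtain x0 where x0: "f x0 = Some y" by (auto simp: ran_def)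
  have "(THE x. f x = Some y) = x0"
    by (rule the_equality) (use x0 inj in \<open>auto simp: inj_on_def domI\<close>)
  with h yr x0 show "f x = Some y" unfolding pinv_def by auto
next
  assume inj: "inj_on f (dom f)" and h: "f x = Some y"
  then have yr: "y \<in> ran f" by (auto simp: ran_def)
  have "(THE x. f x = Some y) = x"
    by (rule the_equality) (use h inj in \<open>auto simp: inj_on_def domI\<close>)
  with yr show "pinv f y = Some x" unfolding pinv_def by auto
qed

lemma meq: "(\<And>x z. f x = Some z \<longleftrightarrow> g x = Some z) \<Longrightarrow> f = g"
  apply (rule ext) by (metis option.exhaust)

fun omul :: "'a::semigroup_mult option \<Rightarrow> 'a option \<Rightarrow> 'a option" where
  "omul None b = b"
| "omul (Some a) None = Some a"
| "omul (Some a) (Some b) = Some (a * b)"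

definition R where
  "R \<Omega> \<pi> \<Lambda> u v = pi_tilde \<Omega> \<pi> u \<circ>\<^sub>m f_set \<Omega> \<pi> \<Lambda> \<circ>\<^sub>m pinv (pi_tilde \<Omega> \<pi> v)"

definition E :: "('a \<Rightarrow> ('b \<rightharpoonup> 'b)) \<Rightarrow> 'a set \<Rightarrow> ('b \<rightharpoonup> 'b)" where
  "E \<pi> L = (\<lambda>x. if (\<forall>s\<in>L. x \<in> dom (\<pi> s)) then Some x else None)"

context
  fixes \<Omega> :: "'b set" and \<pi> :: "'a::{semigroup_mult,mult_zero} \<Rightarrow> ('b \<rightharpoonup> 'b)"
  assumes rep: "is_representation \<Omega> \<pi>"
begin

lemma pi_pb: "dom (\<pi> s) \<subseteq> \<Omega>" "ran (\<pi> s) \<subseteq> \<Omega>" "inj_on (\<pi> s) (dom (\<pi> s))"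
  using rep unfolding is_representation_def pbij_def by auto

lemma pi_mult: "\<pi> s \<circ>\<^sub>m \<pi> t = \<pi> (s * t)"
  using rep unfolding is_representation_def by auto

lemma P_None: "pi_tilde \<Omega> \<pi> None x = Some z \<longleftrightarrow> x \<in> \<Omega> \<and> z = x"
  by (auto simp: pi_tilde_def)

lemma P_Some: "pi_tilde \<Omega> \<pi> (Some s) = \<pi> s"
  by (simp add: pi_tilde_def)

lemma P_dom: "pi_tilde \<Omega> \<pi> u x = Some z \<Longrightarrow> x \<in> \<Omega> \<and> z \<in> \<Omega>"
proof (cases u)
  case (Some s)
  assume "pi_tilde \<Omega> \<pi> u x = Some z"
  then have "x \<in> dom (\<pi> s)" "z \<in> ran (\<pi> s)" using Some by (auto simp: pi_tilde_def ranI)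
  then show ?thesis using pi_pb[of s] by blast
qed (auto simp: pi_tilde_def split: if_splits)

lemma P_inj: "inj_on (pi_tilde \<Omega> \<pi> u) (dom (pi_tilde \<Omega> \<pi> u))"
  using pi_pb by (cases u) (auto simp: pi_tilde_def inj_on_def split: if_splits)

lemma P_inj': "pi_tilde \<Omega> \<pi> u x = Some z \<Longrightarrow> pi_tilde \<Omega> \<pi> u y = Some z \<Longrightarrow> x = y"
  using P_inj[of u] unfolding inj_on_def by (metis domI)

lemma P_omul: "pi_tilde \<Omega> \<pi> (omul u a) t = Some x \<longleftrightarrow> (\<exists>y. pi_tilde \<Omega> \<pi> a t = Some y \<and> pi_tilde \<Omega> \<pi> u y = Some x)"
proof (cases u)
  case None
  then show ?thesis using P_dom[of a t] by (auto simp: P_None)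
next
  case (Some s)
  then show ?thesis
  proof (cases a)
    case None
    then show ?thesis using Some P_dom[of u t x] by (auto simp: P_None)
  next
    case (Some b)
    then show ?thesis using \<open>u = Some s\<close> pi_mult[of s b, symmetric]
      by (simp add: P_Some map_comp_Some_iff)
  qed
qed

lemma P_omul_dom: "t \<in> dom (pi_tilde \<Omega> \<pi> (omul u a)) \<longleftrightarrow> (\<exists>y. pi_tilde \<Omega> \<pi> a t = Some y \<and> y \<in> dom (pi_tilde \<Omega> \<pi> u))"
  using P_omul by blast

lemma f_elem_dom: "x \<in> dom (f_elem \<Omega> \<pi> u) \<longleftrightarrow> x \<in> dom (pi_tilde \<Omega> \<pi> u)"
  unfolding f_elem_def using pinv_Some[OF P_inj[of u]]
  by (auto simp: map_comp_Some_iff)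

lemma R_Some: "R \<Omega> \<pi> \<Lambda> u v x = Some z \<longleftrightarrow>
   (\<exists>y. pi_tilde \<Omega> \<pi> v y = Some x \<and> (\<forall>l\<in>\<Lambda>. y \<in> dom (pi_tilde \<Omega> \<pi> l)) \<and> pi_tilde \<Omega> \<pi> u y = Some z)"
  unfolding R_def using pinv_Some[OF P_inj[of v]] P_dom[of v]
  by (auto simp: map_comp_Some_iff f_set_def f_elem_dom split: if_splits)

lemma R_inj: "R \<Omega> \<pi> \<Lambda> u v x1 = Some z \<Longrightarrow> R \<Omega> \<pi> \<Lambda> u v x2 = Some z \<Longrightarrow> x1 = x2"
proof -
  assume h1: "R \<Omega> \<pi> \<Lambda> u v x1 = Some z" and h2: "R \<Omega> \<pi> \<Lambda> u v x2 = Some z"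
  obtain y1 where y1: "pi_tilde \<Omega> \<pi> v y1 = Some x1" "pi_tilde \<Omega> \<pi> u y1 = Some z" using h1 unfolding R_Some by blast
  obtain y2 where y2: "pi_tilde \<Omega> \<pi> v y2 = Some x2" "pi_tilde \<Omega> \<pi> u y2 = Some z" using h2 unfolding R_Some by blast
  have "y1 = y2" using P_inj' y1(2) y2(2) by blast
  then show "x1 = x2" using y1 y2 by simp
qed

lemma R_pinv: "pinv (R \<Omega> \<pi> \<Lambda> u v) = R \<Omega> \<pi> \<Lambda> v u"
proof (rule meq)
  have inj: "inj_on (R \<Omega> \<pi> \<Lambda> u v) (dom (R \<Omega> \<pi> \<Lambda> u v))"
    unfolding inj_on_def using R_inj by force
  fix x z show "pinv (R \<Omega> \<pi> \<Lambda> u v) x = Some z \<longleftrightarrow> R \<Omega> \<pi> \<Lambda> v u x = Some z"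
    unfolding pinv_Some[OF inj] R_Some by blast
qed

lemma R_pi: "\<pi> s = R \<Omega> \<pi> {Some s, None} (Some s) None"
proof (rule meq)
  fix x z show "\<pi> s x = Some z \<longleftrightarrow> R \<Omega> \<pi> {Some s, None} (Some s) None x = Some z"
  proof
    assume "\<pi> s x = Some z"
    moreover then have "x \<in> \<Omega>" using P_dom[of "Some s" x z] by (simp add: P_Some)
    ultimately show "R \<Omega> \<pi> {Some s, None} (Some s) None x = Some z"
      unfolding R_Some by (intro exI[of _ x]) (auto simp: P_None P_Some)
  next
    assume "R \<Omega> \<pi> {Some s, None} (Some s) None x = Some z"
    then show "\<pi> s x = Some z" unfolding R_Some by (auto simp: P_None P_Some)
  qed
qed

lemma ran_sub: "ran (pi_tilde \<Omega> \<pi> w) \<subseteq> \<Omega>"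
proof
  fix y assume "y \<in> ran (pi_tilde \<Omega> \<pi> w)"
  then obtain x where "pi_tilde \<Omega> \<pi> w x = Some y" by (auto simp: ran_def)
  then show "y \<in> \<Omega>" using P_dom by blast
qed

lemma ran_None: "ran (pi_tilde \<Omega> \<pi> None) = \<Omega>"
proof
  show "ran (pi_tilde \<Omega> \<pi> None) \<subseteq> \<Omega>" by (rule ran_sub)
  show "\<Omega> \<subseteq> ran (pi_tilde \<Omega> \<pi> None)"
  proof
    fix x assume "x \<in> \<Omega>" then have "pi_tilde \<Omega> \<pi> None x = Some x" by (simp add: P_None)
    then show "x \<in> ran (pi_tilde \<Omega> \<pi> None)" by (rule ranI)
  qed
qed

lemma lcm_data:
  assumes "admits_lcm TYPE('a)" "respects_lcm \<pi>"
  shows "\<exists>a b. omul v a = omul w b \<and> ran (pi_tilde \<Omega> \<pi> v) \<inter> ran (pi_tilde \<Omega> \<pi> w) = ran (pi_tilde \<Omega> \<pi> (omul v a))"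
proof (cases v)
  case None
  have "ran (pi_tilde \<Omega> \<pi> w) \<subseteq> \<Omega>" by (rule ran_sub)
  moreover have "ran (pi_tilde \<Omega> \<pi> None) = \<Omega>" by (rule ran_None)
  moreover have "omul None w = omul w None" by (cases w) auto
  ultimately have "omul v w = omul w None \<and> ran (pi_tilde \<Omega> \<pi> v) \<inter> ran (pi_tilde \<Omega> \<pi> w) = ran (pi_tilde \<Omega> \<pi> (omul v w))"
    using None by (simp only: omul.simps Int_absorb1 Int_absorb2)
  then show ?thesis by blast
next
  case (Some s)
  show ?thesis
  proof (cases w)
    case None
    have "ran (pi_tilde \<Omega> \<pi> v) \<subseteq> \<Omega>" by (rule ran_sub)
    moreover have "ran (pi_tilde \<Omega> \<pi> None) = \<Omega>" by (rule ran_None)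
    moreover have "omul v None = omul None v" by (cases v) auto
    ultimately have "omul v None = omul w v \<and> ran (pi_tilde \<Omega> \<pi> v) \<inter> ran (pi_tilde \<Omega> \<pi> w) = ran (pi_tilde \<Omega> \<pi> (omul v None))"
      using None by (simp only: omul.simps Int_absorb1 Int_absorb2)
    then show ?thesis by blast
  next
    case (Some t)
    obtain r where r: "is_lcm r s t" using assms(1) unfolding admits_lcm_def by blast
    have sd: "\<exists>a. omul (Some x) a = Some r" if "sdivides x r" for x
    proof -
      from that consider "r = x" | c where "r = x * c" unfolding sdivides_def by blast
      then show ?thesis
      proof cases
        case 1 then show ?thesis by (intro exI[of _ None]) simp
      next
        case (2 c) then show ?thesis by (intro exI[of _ "Some c"]) simp
      qed
    qed
    have d: "sdivides s r" "sdivides t r" using r unfolding is_lcm_def by simp_all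
    obtain a where a: "omul (Some s) a = Some r" using sd[OF d(1)] by (elim exE)
    obtain b where b: "omul (Some t) b = Some r" using sd[OF d(2)] by (elim exE)
    have "\<forall>r s t. is_lcm r s t \<longrightarrow> ran (\<pi> r) = ran (\<pi> s) \<inter> ran (\<pi> t)"
      using assms(2) unfolding respects_lcm_def .
    note this[rule_format, OF r]
    then have "omul v a = omul w b \<and> ran (pi_tilde \<Omega> \<pi> v) \<inter> ran (pi_tilde \<Omega> \<pi> w) = ran (pi_tilde \<Omega> \<pi> (omul v a))"
      using a b Some \<open>v = Some s\<close> by (simp add: P_Some)
    then show ?thesis by blast
  qed
qed

lemma R_comp:
  assumes vL: "v \<in> \<Lambda>" and ab: "omul v a = omul w b"
    and rn: "ran (pi_tilde \<Omega> \<pi> v) \<inter> ran (pi_tilde \<Omega> \<pi> w) = ran (pi_tilde \<Omega> \<pi> (omul v a))"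
  shows "R \<Omega> \<pi> \<Lambda> u v \<circ>\<^sub>m R \<Omega> \<pi> M w z =
    R \<Omega> \<pi> ((\<lambda>l. omul l a) ` \<Lambda> \<union> (\<lambda>m. omul m b) ` M) (omul u a) (omul z b)"
    (is "?L = R \<Omega> \<pi> ?M _ _")
proof (rule meq)
  let ?P = "pi_tilde \<Omega> \<pi>"
  fix x q
  show "?L x = Some q \<longleftrightarrow> R \<Omega> \<pi> ?M (omul u a) (omul z b) x = Some q"
  proof
    assume "?L x = Some q"
    then obtain p where p: "R \<Omega> \<pi> M w z x = Some p" "R \<Omega> \<pi> \<Lambda> u v p = Some q"
      by (auto simp: map_comp_Some_iff)
    obtain y where y: "?P z y = Some x" "\<forall>m\<in>M. y\<in>dom(?P m)" "?P w y = Some p"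
      using p(1) unfolding R_Some by blast
    obtain y' where y': "?P v y' = Some p" "\<forall>l\<in>\<Lambda>. y'\<in>dom(?P l)" "?P u y' = Some q"
      using p(2) unfolding R_Some by blast
    have "p \<in> ran (?P v) \<inter> ran (?P w)" using y(3) y'(1) by (auto intro: ranI)
    then have "p \<in> ran (?P (omul v a))" using rn by simp
    then obtain t where t: "?P (omul v a) t = Some p" by (auto simp: ran_def)
    then obtain y1 where y1: "?P a t = Some y1" "?P v y1 = Some p" using P_omul by blast
    have "y1 = y'" using P_inj' y1(2) y'(1) by blast
    from t ab have "?P (omul w b) t = Some p" by simp
    then obtain y2 where y2: "?P b t = Some y2" "?P w y2 = Some p" using P_omul by blast
    have "y2 = y" using P_inj' y2(2) y(3) by blast
    have A: "?P (omul z b) t = Some x" using P_omul y2(1) y(1) \<open>y2 = y\<close> by blast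
    have B: "?P (omul u a) t = Some q" using P_omul y1(1) y'(3) \<open>y1 = y'\<close> by blast
    have C: "\<forall>l\<in>?M. t \<in> dom (?P l)"
    proof
      fix l assume "l \<in> ?M"
      then consider l0 where "l0 \<in> \<Lambda>" "l = omul l0 a" | m0 where "m0 \<in> M" "l = omul m0 b" by blast
      then show "t \<in> dom (?P l)"
      proof cases
        case 1 then show ?thesis using P_omul_dom y1(1) y'(2) \<open>y1 = y'\<close> by blast
      next
        case 2 then show ?thesis using P_omul_dom y2(1) y(2) \<open>y2 = y\<close> by blast
      qed
    qed
    show "R \<Omega> \<pi> ?M (omul u a) (omul z b) x = Some q"
      unfolding R_Some using A B C by blast
  next
    assume "R \<Omega> \<pi> ?M (omul u a) (omul z b) x = Some q"
    then obtain t where t: "?P (omul z b) t = Some x" "\<forall>l\<in>?M. t \<in> dom (?P l)" "?P (omul u a) t = Some q"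
      unfolding R_Some by blast
    have "omul v a \<in> ?M" using vL by blast
    then have "t \<in> dom (?P (omul v a))" using t(2) by blast
    then obtain p where p: "?P (omul v a) t = Some p" by blast
    then obtain y1 where y1: "?P a t = Some y1" "?P v y1 = Some p" using P_omul by blast
    from p ab have "?P (omul w b) t = Some p" by simp
    then obtain y2 where y2: "?P b t = Some y2" "?P w y2 = Some p" using P_omul by blast
    obtain y3 where y3: "?P b t = Some y3" "?P z y3 = Some x" using t(1) P_omul by blast
    obtain y4 where y4: "?P a t = Some y4" "?P u y4 = Some q" using t(3) P_omul by blast
    have e: "y3 = y2" "y4 = y1" using y1 y2 y3 y4 by auto
    have L: "\<forall>l\<in>\<Lambda>. y1 \<in> dom (?P l)"
    proof
      fix l assume "l \<in> \<Lambda>"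
      then have "omul l a \<in> ?M" by blast
      then have "t \<in> dom (?P (omul l a))" using t(2) by blast
      then obtain yy where "?P a t = Some yy" "yy \<in> dom (?P l)" unfolding P_omul_dom by blast
      then show "y1 \<in> dom (?P l)" using y1(1) by simp
    qed
    have MM: "\<forall>m\<in>M. y2 \<in> dom (?P m)"
    proof
      fix m assume "m \<in> M"
      then have "omul m b \<in> ?M" by blast
      then have "t \<in> dom (?P (omul m b))" using t(2) by blast
      then obtain yy where "?P b t = Some yy" "yy \<in> dom (?P m)" unfolding P_omul_dom by blast
      then show "y2 \<in> dom (?P m)" using y2(1) by simp
    qed
    have "R \<Omega> \<pi> M w z x = Some p" unfolding R_Some using y3(2) e MM y2(2) by blast
    moreover have "R \<Omega> \<pi> \<Lambda> u v p = Some q" unfolding R_Some using y1(2) L y4(2) e by blast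
    ultimately show "?L x = Some q" by (auto simp: map_comp_Some_iff)
  qed
qed

lemma E_single: "E \<pi> {s} = pinv (\<pi> s) \<circ>\<^sub>m \<pi> s"
proof (rule meq)
  fix x z show "E \<pi> {s} x = Some z \<longleftrightarrow> (pinv (\<pi> s) \<circ>\<^sub>m \<pi> s) x = Some z"
    unfolding E_def map_comp_Some_iff pinv_Some[OF pi_pb(3)]
    using pi_pb(3)[of s] by (auto simp: inj_on_def) (metis domI)
qed

lemma E_insert: "E \<pi> (insert s F) = E \<pi> {s} \<circ>\<^sub>m E \<pi> F"
  by (rule meq) (auto simp: E_def map_comp_Some_iff split: if_splits)

lemma E_gen: "finite L \<Longrightarrow> L \<noteq> {} \<Longrightarrow> E \<pi> L \<in> gen_inv \<pi>"
proof (induction L rule: finite_ne_induct)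
  case (singleton s) then show ?case by (simp add: E_single gen_inv.intros)
next
  case (insert s F) then show ?case
    by (metis E_insert E_single gen_inv.intros)
qed

lemma Lam_dom:
  assumes "Some s \<in> \<Lambda>"
  shows "(\<forall>l\<in>\<Lambda>. y \<in> dom (pi_tilde \<Omega> \<pi> l)) \<longleftrightarrow> (\<forall>s\<in>Some -` \<Lambda>. y \<in> dom (\<pi> s))"
proof
  assume "\<forall>l\<in>\<Lambda>. y \<in> dom (pi_tilde \<Omega> \<pi> l)" then show "\<forall>s\<in>Some -` \<Lambda>. y \<in> dom (\<pi> s)"
    by (auto simp: P_Some)
next
  assume h: "\<forall>s\<in>Some -` \<Lambda>. y \<in> dom (\<pi> s)"
  then have "y \<in> \<Omega>" using assms pi_pb(1) by blast
  show "\<forall>l\<in>\<Lambda>. y \<in> dom (pi_tilde \<Omega> \<pi> l)"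
  proof
    fix l assume "l \<in> \<Lambda>" then show "y \<in> dom (pi_tilde \<Omega> \<pi> l)"
      using h \<open>y \<in> \<Omega>\<close> by (cases l) (auto simp: P_Some P_None)
  qed
qed

lemma R_gen:
  assumes fin: "finite \<Lambda>" and ne: "Some s \<in> \<Lambda>"
  shows "R \<Omega> \<pi> \<Lambda> u v \<in> gen_inv \<pi>"
proof -
  let ?L = "Some -` \<Lambda>"
  have EG: "E \<pi> ?L \<in> gen_inv \<pi>"
  proof (rule E_gen)
    show "finite ?L" using fin by (rule finite_vimageI) simp
    show "?L \<noteq> {}" using ne by blast
  qed
  have Ey: "E \<pi> ?L y = Some y' \<longleftrightarrow> y' = y \<and> (\<forall>l\<in>\<Lambda>. y \<in> dom (pi_tilde \<Omega> \<pi> l))" for y y'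
    unfolding Lam_dom[OF ne] E_def by auto
  have Om: "(\<forall>l\<in>\<Lambda>. y \<in> dom (pi_tilde \<Omega> \<pi> l)) \<Longrightarrow> y \<in> \<Omega>" for y
  proof -
    assume h: "\<forall>l\<in>\<Lambda>. y \<in> dom (pi_tilde \<Omega> \<pi> l)"
    have "y \<in> dom (pi_tilde \<Omega> \<pi> (Some s))" using h ne by blast
    then have "y \<in> dom (\<pi> s)" by (simp add: P_Some)
    then show "y \<in> \<Omega>" using pi_pb(1)[of s] by blast
  qed
  have pv: "pinv (\<pi> b) x = Some y \<longleftrightarrow> \<pi> b y = Some x" for b x y
    using pinv_Some[OF pi_pb(3)] by blast
  show ?thesis
  proof (cases u)
    case None
    show ?thesis
    proof (cases v)
      case None
      have "R \<Omega> \<pi> \<Lambda> u v = E \<pi> ?L"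
        by (rule meq) (use Om in \<open>auto simp: R_Some Ey \<open>u = None\<close> None P_None\<close>)
      then show ?thesis using EG by simp
    next
      case (Some b)
      have "R \<Omega> \<pi> \<Lambda> u v = E \<pi> ?L \<circ>\<^sub>m pinv (\<pi> b)"
        by (rule meq) (use Om in \<open>auto simp: R_Some Ey \<open>u = None\<close> Some P_None P_Some map_comp_Some_iff pv\<close>)
      then show ?thesis using EG by (simp add: gen_inv.intros)
    qed
  next
    case (Some a)
    show ?thesis
    proof (cases v)
      case None
      have "R \<Omega> \<pi> \<Lambda> u v = \<pi> a \<circ>\<^sub>m E \<pi> ?L"
        by (rule meq) (use Om in \<open>auto simp: R_Some Ey \<open>u = Some a\<close> None P_None P_Some map_comp_Some_iff\<close>)
      then show ?thesis using EG by (simp add: gen_inv.intros)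
    next
      case (Some b)
      have "R \<Omega> \<pi> \<Lambda> u v = \<pi> a \<circ>\<^sub>m E \<pi> ?L \<circ>\<^sub>m pinv (\<pi> b)"
        by (rule meq) (use Om in \<open>auto simp: R_Some Ey \<open>u = Some a\<close> Some P_Some map_comp_Some_iff pv\<close>)
      then show ?thesis using EG by (simp add: gen_inv.intros)
    qed
  qed
qed

end


lemma inS: "finite \<Lambda> \<Longrightarrow> \<Lambda> \<inter> range Some \<noteq> {} \<Longrightarrow> u \<in> \<Lambda> \<Longrightarrow> v \<in> \<Lambda> \<Longrightarrow> f = R \<Omega> \<pi> \<Lambda> u v \<Longrightarrow>
  f \<in> {R \<Omega> \<pi> \<Lambda> u v | \<Lambda> u v. finite \<Lambda> \<and> \<Lambda> \<inter> range Some \<noteq> {} \<and> u \<in> \<Lambda> \<and> v \<in> \<Lambda>}"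
  by blast

theorem theorem7p11:
  fixes \<Omega> :: "'b set" and \<pi> :: "'a::{semigroup_mult,mult_zero} \<Rightarrow> ('b \<rightharpoonup> 'b)"
  assumes "zero_left_cancellative TYPE('a)"
    and "admits_lcm TYPE('a)"
    and "is_representation \<Omega> \<pi>"
    and "respects_lcm \<pi>"
  shows "gen_inv \<pi> =
    {pi_tilde \<Omega> \<pi> u \<circ>\<^sub>m f_set \<Omega> \<pi> \<Lambda> \<circ>\<^sub>m pinv (pi_tilde \<Omega> \<pi> v) | \<Lambda> u v.
       finite \<Lambda> \<and> \<Lambda> \<inter> range Some \<noteq> {} \<and> u \<in> \<Lambda> \<and> v \<in> \<Lambda>}"
proof -
  let ?S = "{R \<Omega> \<pi> \<Lambda> u v | \<Lambda> u v. finite \<Lambda> \<and> \<Lambda> \<inter> range Some \<noteq> {} \<and> u \<in> \<Lambda> \<and> v \<in> \<Lambda>}"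
  have eq: "{pi_tilde \<Omega> \<pi> u \<circ>\<^sub>m f_set \<Omega> \<pi> \<Lambda> \<circ>\<^sub>m pinv (pi_tilde \<Omega> \<pi> v) | \<Lambda> u v.
       finite \<Lambda> \<and> \<Lambda> \<inter> range Some \<noteq> {} \<and> u \<in> \<Lambda> \<and> v \<in> \<Lambda>} = ?S"
    unfolding R_def ..
  have "gen_inv \<pi> \<subseteq> ?S"
  proof
    fix f assume "f \<in> gen_inv \<pi>"
    then show "f \<in> ?S"
    proof induction
      case (base s)
      have "\<pi> s = R \<Omega> \<pi> {Some s, None} (Some s) None" using R_pi[OF assms(3)] .
      then show ?case by (intro inS) auto
    next
      case (comp f g)
      from comp.IH obtain \<Lambda> u v where f: "f = R \<Omega> \<pi> \<Lambda> u v" "finite \<Lambda>" "\<Lambda> \<inter> range Some \<noteq> {}" "u \<in> \<Lambda>" "v \<in> \<Lambda>"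
        by blast
      from comp.IH obtain M w z where g: "g = R \<Omega> \<pi> M w z" "finite M" "M \<inter> range Some \<noteq> {}" "w \<in> M" "z \<in> M"
        by blast
      obtain a b where ab: "omul v a = omul w b"
        "ran (pi_tilde \<Omega> \<pi> v) \<inter> ran (pi_tilde \<Omega> \<pi> w) = ran (pi_tilde \<Omega> \<pi> (omul v a))"
        using lcm_data[OF assms(3) assms(2) assms(4)] by blast
      let ?M = "(\<lambda>l. omul l a) ` \<Lambda> \<union> (\<lambda>m. omul m b) ` M"
      have c: "f \<circ>\<^sub>m g = R \<Omega> \<pi> ?M (omul u a) (omul z b)"
        using R_comp[OF assms(3) f(5) ab] f(1) g(1) by simp
      obtain s where "Some s \<in> \<Lambda>" using f(3) by blast
      then have "omul (Some s) a \<in> ?M" by blast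
      moreover have "omul (Some s) a \<in> range Some" by (cases a) auto
      ultimately have "?M \<inter> range Some \<noteq> {}" by blast
      moreover have "finite ?M" using f(2) g(2) by blast
      moreover have "omul u a \<in> ?M" "omul z b \<in> ?M" using f(4) g(5) by blast+
      ultimately show ?case using c by (intro inS) assumption+
    next
      case (inv f)
      then obtain \<Lambda> u v where f: "f = R \<Omega> \<pi> \<Lambda> u v" "finite \<Lambda>" "\<Lambda> \<inter> range Some \<noteq> {}" "u \<in> \<Lambda>" "v \<in> \<Lambda>"
        by blast
      have "pinv f = R \<Omega> \<pi> \<Lambda> v u" using R_pinv[OF assms(3)] f(1) by simp
      then show ?case using f(2-5) by (intro inS) (assumption | simp)+
    qed
  qed
  moreover have "?S \<subseteq> gen_inv \<pi>"
  proof
    fix f assume "f \<in> ?S"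
    then obtain \<Lambda> u v where f: "f = R \<Omega> \<pi> \<Lambda> u v" "finite \<Lambda>" "\<Lambda> \<inter> range Some \<noteq> {}"
      by blast
    then obtain s where "Some s \<in> \<Lambda>" by blast
    then show "f \<in> gen_inv \<pi>" using R_gen[OF assms(3) f(2)] f(1) by blast
  qed
  ultimately have "gen_inv \<pi> = ?S" by (rule subset_antisym)
  then show ?thesis by (simp only: eq)
qed

end
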